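(* Let $G$ be a finite simple graph with at least one edge and let $I=I(G)$ be its edge ideal. Then $v(I^{n+1})\le 2n+v(I)$ for all $n\ge 1$.
   Context: $K$ is a field and $S=K[x_1,\dots,x_t]$ is standard graded, with the vertices of $G$ being $x_1,\dots,x_t$. The edge ideal is $I(G)=\langle x_ix_j : \{x_i,x_j\}\text{ an edge of } G\rangle$. For a proper graded ideal $J$, the $v$-number is $v(J)=\min\{k\ge 0 : \exists f\in S_k,\ \mathcal P\in\operatorname{Ass}(S/J) \text{ with } (J:f)=\mathcal P\}$. *)

theory Defs
  imports Main "HOL-Library.Poly_Mapping"
begin

(* The polynomial ring S = K[x_v : v in 'v] over a field K, with finitely many
   variables indexed by the finite type 'v (the vertex set of G). *)
type_synonym ('v, 'k) mpoly = "('v \<Rightarrow>\<^sub>0 nat) \<Rightarrow>\<^sub>0 'k"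

definition var :: "'v \<Rightarrow> ('v, 'k::field) mpoly" where
  "var v = Poly_Mapping.single (Poly_Mapping.single v 1) 1"

definition mon_deg :: "('v::finite \<Rightarrow>\<^sub>0 nat) \<Rightarrow> nat" where
  "mon_deg m = (\<Sum>v\<in>UNIV. Poly_Mapping.lookup m v)"

(* f lies in S_k: homogeneous of degree k (0 counts as homogeneous of every degree) *)
definition homogeneous_of_deg :: "nat \<Rightarrow> ('v::finite, 'k::field) mpoly \<Rightarrow> bool" where
  "homogeneous_of_deg k f \<longleftrightarrow> (\<forall>m\<in>Poly_Mapping.keys f. mon_deg m = k)"

definition is_ideal :: "'a::comm_ring_1 set \<Rightarrow> bool" where
  "is_ideal I \<longleftrightarrow> 0 \<in> I \<and> (\<forall>a\<in>I. \<forall>b\<in>I. a + b \<in> I) \<and> (\<forall>a\<in>I. \<forall>r. r * a \<in> I)"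

definition ideal_gen :: "'a::comm_ring_1 set \<Rightarrow> 'a set" where
  "ideal_gen A = \<Inter>{I. is_ideal I \<and> A \<subseteq> I}"

definition ideal_mult :: "'a::comm_ring_1 set \<Rightarrow> 'a set \<Rightarrow> 'a set" where
  "ideal_mult I J = ideal_gen {a * b | a b. a \<in> I \<and> b \<in> J}"

fun ideal_pow :: "'a::comm_ring_1 set \<Rightarrow> nat \<Rightarrow> 'a set" where
  "ideal_pow I 0 = UNIV"
| "ideal_pow I (Suc n) = ideal_mult I (ideal_pow I n)"

definition colon :: "'a::comm_ring_1 set \<Rightarrow> 'a \<Rightarrow> 'a set" where
  "colon J f = {g. g * f \<in> J}"

definition prime_ideal :: "'a::comm_ring_1 set \<Rightarrow> bool" where
  "prime_ideal P \<longleftrightarrow> is_ideal P \<and> P \<noteq> UNIV \<and> (\<forall>a b. a * b \<in> P \<longrightarrow> a \<in> P \<or> b \<in> P)"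

definition ass :: "'a::comm_ring_1 set \<Rightarrow> 'a set set" where
  "ass J = {P. prime_ideal P \<and> (\<exists>f. colon J f = P)}"

definition v_number :: "('v::finite, 'k::field) mpoly set \<Rightarrow> nat" where
  "v_number J = (LEAST k. \<exists>f P. homogeneous_of_deg k f \<and> P \<in> ass J \<and> colon J f = P)"

definition simple_graph :: "'v set set \<Rightarrow> bool" where
  "simple_graph E \<longleftrightarrow> (\<forall>e\<in>E. card e = 2)"

definition edge_ideal :: "'v set set \<Rightarrow> ('v, 'k::field) mpoly set" where
  "edge_ideal E = ideal_gen {var i * var j | i j. {i, j} \<in> E}"

end

theory Submission
  imports Defs
begin

definition mk :: "('v::finite \<Rightarrow> nat) \<Rightarrow> ('v \<Rightarrow>\<^sub>0 nat)" where
  "mk f = Abs_poly_mapping f"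

lemma lookup_mk [simp]: "Poly_Mapping.lookup (mk f) = f"
  unfolding mk_def by (rule lookup_Abs_poly_mapping) simp

lemma mk_lookup [simp]: "mk (Poly_Mapping.lookup m) = m"
  by (rule poly_mapping_eqI) simp

lemma mk_add: "mk f + mk g = mk (\<lambda>v. f v + g v)"
  by (rule poly_mapping_eqI) (simp add: lookup_add)

definition X :: "('v \<Rightarrow>\<^sub>0 nat) \<Rightarrow> ('v, 'k::field) mpoly" where
  "X m = Poly_Mapping.single m 1"

lemma X_mult: "X a * X b = (X (a + b) :: ('v,'k::field) mpoly)"
  unfolding X_def by (simp add: mult_single)

lemma var_X: "(var v :: ('v::finite,'k::field) mpoly) = X (mk (\<lambda>w. if w = v then 1 else 0))"
proof -
  have "mk (\<lambda>w. if w = v then 1 else 0) = Poly_Mapping.single v 1"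
    by (rule poly_mapping_eqI) (simp add: lookup_single when_def)
  then show ?thesis by (simp add: var_def X_def)
qed

lemma lookup_X_mult: "Poly_Mapping.lookup (X u * g) (u + m) = Poly_Mapping.lookup (g :: ('v,'k::field) mpoly) m"
  unfolding X_def lookup_mult by (simp add: lookup_single when_mult mult_when)

lemma keys_X_mult: "Poly_Mapping.keys (X u * (g :: ('v,'k::field) mpoly)) = (\<lambda>m. u + m) ` Poly_Mapping.keys g"
proof
  show "Poly_Mapping.keys (X u * g) \<subseteq> (\<lambda>m. u + m) ` Poly_Mapping.keys g"
    using keys_mult[of "X u" g] by (auto simp: X_def)
  show "(\<lambda>m. u + m) ` Poly_Mapping.keys g \<subseteq> Poly_Mapping.keys (X u * g)"
    by (auto simp: in_keys_iff lookup_X_mult)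
qed

lemma keys_X [simp]: "Poly_Mapping.keys (X u :: ('v,'k::field) mpoly) = {u}"
  by (simp add: X_def)

lemma is_idealD:
  assumes "is_ideal I"
  shows "0 \<in> I" "a \<in> I \<Longrightarrow> b \<in> I \<Longrightarrow> a + b \<in> I" "a \<in> I \<Longrightarrow> r * a \<in> I"
  using assms unfolding is_ideal_def by auto

lemma ideal_mult_right: "is_ideal I \<Longrightarrow> a \<in> I \<Longrightarrow> a * r \<in> I"
  by (metis is_idealD(3) mult.commute)

lemma ideal_neg: "is_ideal I \<Longrightarrow> a \<in> I \<Longrightarrow> - a \<in> I"
  using is_idealD(3)[of I a "-1"] by simp

lemma ideal_diff: "is_ideal I \<Longrightarrow> a \<in> I \<Longrightarrow> b \<in> I \<Longrightarrow> a - b \<in> I"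
  using is_idealD(2)[of I a "-b"] ideal_neg[of I b] by simp

lemma ideal_sum: assumes "is_ideal I" shows "finite S \<Longrightarrow> (\<And>x. x \<in> S \<Longrightarrow> f x \<in> I) \<Longrightarrow> sum f S \<in> I"
proof (induction S rule: finite_induct)
  case empty then show ?case by (simp add: is_idealD(1)[OF assms])
next
  case (insert x F) then show ?case by (simp add: is_idealD(2)[OF assms])
qed

lemma is_ideal_ideal_gen: "is_ideal (ideal_gen A)"
  unfolding is_ideal_def
proof (intro conjI ballI allI)
  show "0 \<in> ideal_gen A" unfolding ideal_gen_def using is_idealD(1) by blast
  fix a b assume "a \<in> ideal_gen A" "b \<in> ideal_gen A"
  then show "a + b \<in> ideal_gen A" unfolding ideal_gen_def using is_idealD(2) by blast
next
  fix a r assume "a \<in> ideal_gen A"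
  then show "r * a \<in> ideal_gen A" unfolding ideal_gen_def using is_idealD(3) by blast
qed

lemma ideal_gen_sub: "A \<subseteq> ideal_gen A"
  unfolding ideal_gen_def by auto

lemma ideal_gen_least: "is_ideal J \<Longrightarrow> A \<subseteq> J \<Longrightarrow> ideal_gen A \<subseteq> J"
  unfolding ideal_gen_def by auto

lemma is_ideal_UNIV: "is_ideal UNIV"
  unfolding is_ideal_def by auto

lemma is_ideal_ideal_mult: "is_ideal (ideal_mult I J)"
  unfolding ideal_mult_def by (rule is_ideal_ideal_gen)

lemma ideal_mult_mem: "a \<in> I \<Longrightarrow> b \<in> J \<Longrightarrow> a * b \<in> ideal_mult I J"
proof -
  assume "a \<in> I" "b \<in> J"
  then have "a * b \<in> {x * y | x y. x \<in> I \<and> y \<in> J}" by blast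
  then show ?thesis unfolding ideal_mult_def using ideal_gen_sub by (rule subsetD[rotated])
qed

lemma is_ideal_pow: "is_ideal (ideal_pow I k)"
proof (cases k)
  case 0 then show ?thesis by (simp add: is_ideal_UNIV)
next
  case (Suc j) then show ?thesis by (simp add: is_ideal_ideal_mult)
qed

lemma is_ideal_colon: assumes "is_ideal J" shows "is_ideal (colon J f)"
  unfolding is_ideal_def colon_def
proof (intro conjI ballI allI; simp)
  show "0 \<in> J" using is_idealD(1)[OF assms] .
  fix a b assume "a * f \<in> J" "b * f \<in> J"
  then show "(a + b) * f \<in> J" using is_idealD(2)[OF assms] by (simp add: distrib_right)
next
  fix a r assume "a * f \<in> J"
  then show "r * a * f \<in> J" using is_idealD(3)[OF assms] by (simp add: mult.assoc)
qed

lemma single0_X: "Poly_Mapping.single 0 c * X m = (Poly_Mapping.single m c :: ('v,'k::field) mpoly)"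
  unfolding X_def by (simp add: mult_single)

lemma poly_sum_monomials:
  "(p :: ('v,'k::field) mpoly) = (\<Sum>m\<in>Poly_Mapping.keys p. Poly_Mapping.single 0 (Poly_Mapping.lookup p m) * X m)"
proof (rule poly_mapping_eqI)
  fix k
  have "Poly_Mapping.lookup (\<Sum>m\<in>Poly_Mapping.keys p. Poly_Mapping.single 0 (Poly_Mapping.lookup p m) * X m) k
      = (\<Sum>m\<in>Poly_Mapping.keys p. Poly_Mapping.lookup p m when m = k)"
    unfolding single0_X lookup_sum lookup_single by (rule refl)
  also have "\<dots> = Poly_Mapping.lookup p k"
  proof (cases "k \<in> Poly_Mapping.keys p")
    case True
    then show ?thesis unfolding when_def by (simp only: sum.delta finite_keys if_True)
  next
    case False
    then have "\<forall>m\<in>Poly_Mapping.keys p. (Poly_Mapping.lookup p m when m = k) = 0" by (simp add: when_def)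
    then have "(\<Sum>m\<in>Poly_Mapping.keys p. Poly_Mapping.lookup p m when m = k) = 0" by (rule sum.neutral)
    moreover have "Poly_Mapping.lookup p k = 0" using False by (rule iffD1[OF not_in_keys_iff_lookup_eq_zero])
    ultimately show ?thesis by (rule trans[OF _ sym])
  qed
  finally show "Poly_Mapping.lookup p k = Poly_Mapping.lookup (\<Sum>m\<in>Poly_Mapping.keys p. Poly_Mapping.single 0 (Poly_Mapping.lookup p m) * X m) k" by (rule sym)
qed

lemma mem_by_monomials:
  assumes "is_ideal J" and "\<And>m. m \<in> Poly_Mapping.keys p \<Longrightarrow> X m \<in> J"
  shows "(p :: ('v,'k::field) mpoly) \<in> J"
proof -
  have "(\<Sum>m\<in>Poly_Mapping.keys p. Poly_Mapping.single 0 (Poly_Mapping.lookup p m) * X m) \<in> J"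
    by (rule ideal_sum[OF assms(1)]) (simp_all add: is_idealD(3)[OF assms(1) assms(2)])
  then show ?thesis by (simp only: poly_sum_monomials[of p, symmetric])
qed

lemma poly_sum_singles:
  "(p :: 'a \<Rightarrow>\<^sub>0 'b::comm_monoid_add) = (\<Sum>a\<in>Poly_Mapping.keys p. Poly_Mapping.single a (Poly_Mapping.lookup p a))"
proof (rule poly_mapping_eqI)
  fix k
  have "Poly_Mapping.lookup (\<Sum>a\<in>Poly_Mapping.keys p. Poly_Mapping.single a (Poly_Mapping.lookup p a)) k
      = (\<Sum>a\<in>Poly_Mapping.keys p. if a = k then Poly_Mapping.lookup p a else 0)"
    unfolding lookup_sum lookup_single when_def by (rule refl)
  also have "\<dots> = Poly_Mapping.lookup p k"
    by (simp only: sum.delta finite_keys) (simp add: in_keys_iff)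
  finally show "Poly_Mapping.lookup p k = Poly_Mapping.lookup (\<Sum>a\<in>Poly_Mapping.keys p. Poly_Mapping.single a (Poly_Mapping.lookup p a)) k" by (rule sym)
qed

lemma no_zero_div_gen:
  fixes h :: "'a::cancel_comm_monoid_add \<Rightarrow> 'c::{ordered_cancel_comm_monoid_add, linorder}"
  and f g :: "'a \<Rightarrow>\<^sub>0 'b::{comm_semiring_1, semiring_no_zero_divisors}"
  assumes inj: "inj h" and hadd: "\<And>x y. h (x + y) = h x + h y"
  and f0: "f \<noteq> 0" and g0: "g \<noteq> 0"
  shows "f * g \<noteq> 0"
proof -
  define F where "F = Poly_Mapping.keys f"
  define G where "G = Poly_Mapping.keys g"
  have finF: "finite F" and finG: "finite G" by (simp_all add: F_def G_def)
  have neF: "F \<noteq> {}" and neG: "G \<noteq> {}" using f0 g0 by (simp_all add: F_def G_def)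
  obtain aF where aF: "aF \<in> F" "h aF = Max (h ` F)"
  proof -
    have "Max (h ` F) \<in> h ` F" using finF neF by (intro Max_in) auto
    then show ?thesis using that by auto
  qed
  obtain aG where aG: "aG \<in> G" "h aG = Max (h ` G)"
  proof -
    have "Max (h ` G) \<in> h ` G" using finG neG by (intro Max_in) auto
    then show ?thesis using that by auto
  qed
  have leF: "h a \<le> h aF" if "a \<in> F" for a using that aF finF by simp
  have leG: "h b \<le> h aG" if "b \<in> G" for b using that aG finG by simp
  have key: "a + b \<noteq> aF + aG" if "a \<in> F" "b \<in> G" "\<not> (a = aF \<and> b = aG)" for a b
  proof
    assume eq: "a + b = aF + aG"
    have "h a + h b < h aF + h aG"
    proof (cases "a = aF")
      case True
      then have "b \<noteq> aG" using that by simp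
      then have "h b < h aG" using leG[OF that(2)] inj by (metis injD order_le_imp_less_or_eq)
      then show ?thesis using leF[OF that(1)] by (simp add: add_le_less_mono)
    next
      case False
      then have "h a < h aF" using leF[OF that(1)] inj by (metis injD order_le_imp_less_or_eq)
      then show ?thesis using leG[OF that(2)] by (simp add: add_less_le_mono)
    qed
    moreover have "h a + h b = h aF + h aG" using eq hadd[of a b] hadd[of aF aG] by simp
    ultimately show False by simp
  qed
  have prod: "f * g = (\<Sum>a\<in>F. \<Sum>b\<in>G. Poly_Mapping.single (a + b) (Poly_Mapping.lookup f a * Poly_Mapping.lookup g b))"
  proof -
    have "f * g = (\<Sum>a\<in>F. Poly_Mapping.single a (Poly_Mapping.lookup f a)) * (\<Sum>b\<in>G. Poly_Mapping.single b (Poly_Mapping.lookup g b))"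
      unfolding F_def G_def using poly_sum_singles[of f] poly_sum_singles[of g] by simp
    also have "\<dots> = (\<Sum>a\<in>F. \<Sum>b\<in>G. Poly_Mapping.single a (Poly_Mapping.lookup f a) * Poly_Mapping.single b (Poly_Mapping.lookup g b))"
      by (rule sum_product)
    finally show ?thesis by (simp add: mult_single)
  qed
  have "Poly_Mapping.lookup (f * g) (aF + aG) = (\<Sum>a\<in>F. \<Sum>b\<in>G. if a = aF \<and> b = aG then Poly_Mapping.lookup f a * Poly_Mapping.lookup g b else 0)"
    unfolding prod lookup_sum lookup_single when_def
    by (intro sum.cong refl) (use key in auto)
  also have "\<dots> = (\<Sum>a\<in>F. if a = aF then Poly_Mapping.lookup f a * Poly_Mapping.lookup g aG else 0)"
    by (intro sum.cong refl) (use finG aG in \<open>simp add: sum.delta\<close>)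
  also have "\<dots> = Poly_Mapping.lookup f aF * Poly_Mapping.lookup g aG"
    using finF aF by (simp add: sum.delta)
  also have "\<dots> \<noteq> 0" using aF aG by (simp add: F_def G_def in_keys_iff)
  finally show ?thesis by auto
qed

lemma mpoly_no_zero_div:
  fixes f g :: "('v::finite, 'k::field) mpoly"
  assumes "f \<noteq> 0" "g \<noteq> 0"
  shows "f * g \<noteq> 0"
proof -
  obtain \<iota> :: "'v \<Rightarrow> nat" and n where "\<iota> ` UNIV = {i. i < n}" "inj_on \<iota> UNIV"
    using finite_imp_inj_to_nat_seg[of "UNIV :: 'v set"] by auto
  then have inj\<iota>: "inj \<iota>" by simp
  define h :: "('v \<Rightarrow>\<^sub>0 nat) \<Rightarrow> (nat \<Rightarrow>\<^sub>0 nat)" where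
    "h m = (\<Sum>v\<in>UNIV. Poly_Mapping.single (\<iota> v) (Poly_Mapping.lookup m v))" for m
  have hadd: "h (x + y) = h x + h y" for x y
    unfolding h_def by (simp add: lookup_add single_add sum.distrib)
  have lk: "Poly_Mapping.lookup (h m) (\<iota> w) = Poly_Mapping.lookup m w" for m w
  proof -
    have "Poly_Mapping.lookup (h m) (\<iota> w) = (\<Sum>v\<in>UNIV. if v = w then Poly_Mapping.lookup m v else 0)"
      unfolding h_def lookup_sum lookup_single when_def
      by (intro sum.cong refl) (use inj\<iota> in \<open>auto dest: injD\<close>)
    also have "\<dots> = Poly_Mapping.lookup m w" by (simp add: sum.delta)
    finally show ?thesis .
  qed
  have "inj h"
  proof (rule injI)
    fix x y assume "h x = h y"
    then have "Poly_Mapping.lookup x w = Poly_Mapping.lookup y w" for w using lk by metis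
    then show "x = y" by (rule poly_mapping_eqI)
  qed
  then show ?thesis using no_zero_div_gen[OF _ hadd] assms by blast
qed

definition cdeg :: "'v set \<Rightarrow> ('v::finite \<Rightarrow>\<^sub>0 nat) \<Rightarrow> nat" where
  "cdeg C m = (\<Sum>v\<in>C. Poly_Mapping.lookup m v)"

definition D :: "'v set \<Rightarrow> nat \<Rightarrow> ('v::finite, 'k::field) mpoly set" where
  "D C j = {p. \<forall>m\<in>Poly_Mapping.keys p. j \<le> cdeg C m}"

lemma cdeg_add: "cdeg C (a + b) = cdeg C a + cdeg C b"
  unfolding cdeg_def by (simp add: lookup_add sum.distrib)

lemma cdeg_mk: "cdeg C (mk f) = (\<Sum>v\<in>C. f v)"
  unfolding cdeg_def by simp

lemma D_0: "D C 0 = UNIV"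
  unfolding D_def by auto

lemma is_ideal_D: "is_ideal (D C j :: ('v::finite,'k::field) mpoly set)"
  unfolding is_ideal_def
proof (intro conjI ballI allI)
  show "0 \<in> (D C j :: ('v,'k) mpoly set)" unfolding D_def by simp
  fix a b :: "('v,'k) mpoly" assume "a \<in> D C j" "b \<in> D C j"
  then show "a + b \<in> (D C j :: ('v,'k) mpoly set)" unfolding D_def using keys_add[of a b] by blast
next
  fix a r :: "('v,'k) mpoly" assume a: "a \<in> D C j"
  show "r * a \<in> (D C j :: ('v,'k) mpoly set)" unfolding D_def
  proof (intro CollectI ballI)
    fix m assume "m \<in> Poly_Mapping.keys (r * a)"
    then obtain x y where "m = x + y" "y \<in> Poly_Mapping.keys a" using keys_mult[of r a] by blast
    then show "j \<le> cdeg C m" using a unfolding D_def by (auto simp: cdeg_add)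
  qed
qed

lemma D_mult: assumes "p \<in> D C i" "q \<in> D C j" shows "p * q \<in> D C (i + j)"
  unfolding D_def
proof (intro CollectI ballI)
  fix m assume "m \<in> Poly_Mapping.keys (p * q)"
  then obtain x y where "m = x + y" "x \<in> Poly_Mapping.keys p" "y \<in> Poly_Mapping.keys q" using keys_mult[of p q] by blast
  then show "i + j \<le> cdeg C m" using assms unfolding D_def by (auto simp: cdeg_add intro: add_mono)
qed

lemma ideal_mult_D: assumes "I \<subseteq> D C i" "J \<subseteq> D C j" shows "ideal_mult I J \<subseteq> D C (i + j)"
proof -
  have "{a * b |a b. a \<in> I \<and> b \<in> J} \<subseteq> D C (i + j)" using assms D_mult by blast
  then show ?thesis unfolding ideal_mult_def by (rule ideal_gen_least[OF is_ideal_D])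
qed

lemma ideal_pow_D: assumes "I \<subseteq> D C 1" shows "ideal_pow I k \<subseteq> D C k"
proof (induction k)
  case 0 then show ?case by (simp add: D_0)
next
  case (Suc k) then show ?case using ideal_mult_D[OF assms Suc] by simp
qed

lemma one_notin_D1: "(1 :: ('v::finite,'k::field) mpoly) \<notin> D C 1"
  unfolding D_def cdeg_def by simp

lemma prime_D1: "prime_ideal (D C 1 :: ('v::finite,'k::field) mpoly set)"
  unfolding prime_ideal_def
proof (intro conjI allI impI)
  show "is_ideal (D C 1 :: ('v,'k) mpoly set)" by (rule is_ideal_D)
  show "D C 1 \<noteq> (UNIV :: ('v,'k) mpoly set)" using one_notin_D1 by blast
  fix a b :: "('v,'k) mpoly"
  assume ab: "a * b \<in> D C 1"
  define r where "r p = Abs_poly_mapping (\<lambda>m. if cdeg C m = 0 then Poly_Mapping.lookup p m else 0)" for p :: "('v,'k) mpoly"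
  have lr: "Poly_Mapping.lookup (r p) = (\<lambda>m. if cdeg C m = 0 then Poly_Mapping.lookup p m else 0)" for p
    unfolding r_def
    by (rule lookup_Abs_poly_mapping) (rule finite_subset[OF _ finite_lookup[of p]], auto)
  have r0: "\<forall>m\<in>Poly_Mapping.keys (r p). cdeg C m = 0" for p
    by (auto simp: in_keys_iff lr split: if_splits)
  have rD: "p - r p \<in> D C 1" for p
    unfolding D_def by (auto simp: in_keys_iff lr lookup_minus split: if_splits)
  have rz: "r p = 0 \<longleftrightarrow> p \<in> D C 1" for p
  proof
    assume "r p = 0"
    then show "p \<in> D C 1" using rD[of p] by simp
  next
    assume "p \<in> D C 1"
    show "r p = 0"
    proof (rule poly_mapping_eqI)
      fix k
      show "Poly_Mapping.lookup (r p) k = Poly_Mapping.lookup 0 k"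
      proof (cases "cdeg C k = 0")
        case True
        then have "k \<notin> Poly_Mapping.keys p" using \<open>p \<in> D C 1\<close> unfolding D_def by fastforce
        then show ?thesis by (simp add: lr in_keys_iff)
      qed (simp add: lr)
    qed
  qed
  have "a * b - r a * r b = (a - r a) * b + r a * (b - r b)" by (simp add: algebra_simps)
  also have "\<dots> \<in> D C 1"
    by (rule is_idealD(2)[OF is_ideal_D ideal_mult_right[OF is_ideal_D rD] is_idealD(3)[OF is_ideal_D rD]])
  finally have h1: "a * b - r a * r b \<in> D C 1" .
  have "a * b - (a * b - r a * r b) \<in> D C 1" by (rule ideal_diff[OF is_ideal_D ab h1])
  then have "r a * r b \<in> D C 1" by simp
  moreover have "\<forall>m\<in>Poly_Mapping.keys (r a * r b). cdeg C m = 0"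
  proof
    fix m assume "m \<in> Poly_Mapping.keys (r a * r b)"
    then obtain x y where "m = x + y" "x \<in> Poly_Mapping.keys (r a)" "y \<in> Poly_Mapping.keys (r b)"
      using keys_mult[of "r a" "r b"] by blast
    then show "cdeg C m = 0" using r0 by (simp add: cdeg_add)
  qed
  ultimately have "Poly_Mapping.keys (r a * r b) = {}" unfolding D_def by fastforce
  then have "r a * r b = 0" by simp
  then have "r a = 0 \<or> r b = 0" using mpoly_no_zero_div by blast
  then show "a \<in> D C 1 \<or> b \<in> D C 1" using rz by blast
qed

definition indep :: "'v set set \<Rightarrow> 'v set \<Rightarrow> bool" where
  "indep E A \<longleftrightarrow> (\<forall>i j. {i, j} \<in> E \<longrightarrow> \<not> (i \<in> A \<and> j \<in> A))"

definition nbr :: "'v set set \<Rightarrow> 'v set \<Rightarrow> 'v set" where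
  "nbr E A = {u. \<exists>a\<in>A. {a, u} \<in> E}"

definition vcover :: "'v set set \<Rightarrow> 'v set \<Rightarrow> bool" where
  "vcover E C \<longleftrightarrow> (\<forall>i j. {i, j} \<in> E \<longrightarrow> i \<in> C \<or> j \<in> C)"

lemma edge_neq: "simple_graph E \<Longrightarrow> {i, j} \<in> E \<Longrightarrow> i \<noteq> j"
  unfolding simple_graph_def by fastforce

definition ee :: "'v \<Rightarrow> 'v \<Rightarrow> ('v::finite \<Rightarrow>\<^sub>0 nat)" where
  "ee i j = mk (\<lambda>w. (if w = i then 1 else 0) + (if w = j then 1 else 0))"

lemma var_mult: "(var i * var j :: ('v::finite,'k::field) mpoly) = X (ee i j)"
  unfolding var_X X_mult mk_add ee_def by simp

lemma var_mult_in: "{i, j} \<in> E \<Longrightarrow> (var i * var j :: ('v::finite,'k::field) mpoly) \<in> edge_ideal E"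
  unfolding edge_ideal_def by (rule subsetD[OF ideal_gen_sub]) blast

lemma edge_D: assumes "vcover E C" shows "(edge_ideal E :: ('v::finite,'k::field) mpoly set) \<subseteq> D C 1"
  unfolding edge_ideal_def
proof (rule ideal_gen_least[OF is_ideal_D], rule subsetI)
  fix x :: "('v,'k) mpoly" assume "x \<in> {var i * var j |i j. {i, j} \<in> E}"
  then obtain i j where x: "x = var i * var j" "{i, j} \<in> E" by blast
  then have "i \<in> C \<or> j \<in> C" using assms unfolding vcover_def by blast
  then have "1 \<le> cdeg C (ee i j)"
    unfolding ee_def cdeg_mk by (auto simp: sum.distrib sum.delta)
  then show "x \<in> D C 1" unfolding x var_mult D_def by simp
qed

definition pw :: "'v \<Rightarrow> 'v \<Rightarrow> nat \<Rightarrow> ('v::finite \<Rightarrow>\<^sub>0 nat)" where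
  "pw a b k = mk (\<lambda>v. (if v = a then k else 0) + (if v = b then k else 0))"

lemma pw_in: assumes "{a, b} \<in> E"
  shows "(X (pw a b k) :: ('v::finite,'k::field) mpoly) \<in> ideal_pow (edge_ideal E) k"
proof (induction k)
  case 0
  then show ?case by simp
next
  case (Suc k)
  have "pw a b (Suc k) = ee a b + pw a b k"
    unfolding pw_def ee_def mk_add by (rule arg_cong[where f = mk]) auto
  then have "(X (pw a b (Suc k)) :: ('v,'k) mpoly) = (var a * var b) * X (pw a b k)"
    by (simp add: var_mult X_mult)
  then show ?case using ideal_mult_mem[OF var_mult_in[OF assms] Suc] by simp
qed

lemma witness:
  fixes E :: "'v::finite set set" and k :: nat
  assumes sg: "simple_graph E" and ind: "indep E A" and vc: "vcover E (nbr E A)"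
    and aA: "a \<in> A" and ab: "{a, b} \<in> E"
  defines "u \<equiv> mk (\<lambda>v. (if v \<in> A then 1 else 0) + (if v = a then k else 0) + (if v = b then k else 0))"
  shows "colon (ideal_pow (edge_ideal E :: ('v,'k::field) mpoly set) (k + 1)) (X u) = D (nbr E A) 1"
proof -
  let ?N = "nbr E A"
  let ?I = "edge_ideal E :: ('v,'k) mpoly set"
  have bN: "b \<in> ?N" using aA ab unfolding nbr_def by blast
  have disj: "v \<notin> ?N" if "v \<in> A" for v
    using that ind unfolding nbr_def indep_def by blast
  have bA: "b \<notin> A" using disj bN by blast
  have aN: "a \<notin> ?N" using disj aA by blast
  have cu: "cdeg ?N u = k"
  proof -
    have "cdeg ?N u = (\<Sum>v\<in>?N. (if v = b then k else 0))"
      unfolding u_def cdeg_mk by (rule sum.cong) (use disj aN in auto)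
    also have "\<dots> = k" using bN by (simp add: sum.delta)
    finally show ?thesis .
  qed
  show ?thesis
  proof (rule set_eqI, rule iffI)
    fix g :: "('v,'k) mpoly"
    assume "g \<in> colon (ideal_pow ?I (k + 1)) (X u)"
    then have "g * X u \<in> D ?N (k + 1)"
      using ideal_pow_D[OF edge_D[OF vc]] unfolding colon_def by blast
    then have gD: "\<forall>m\<in>Poly_Mapping.keys (X u * g). k + 1 \<le> cdeg ?N m"
      unfolding D_def by (simp add: mult.commute)
    show "g \<in> D ?N 1" unfolding D_def
    proof (intro CollectI ballI)
      fix m assume "m \<in> Poly_Mapping.keys g"
      then have "u + m \<in> Poly_Mapping.keys (X u * g)" by (simp add: keys_X_mult)
      then have "k + 1 \<le> cdeg ?N (u + m)" using gD by blast
      then show "1 \<le> cdeg ?N m" using cu by (simp add: cdeg_add)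
    qed
  next
    fix g :: "('v,'k) mpoly"
    assume gD: "g \<in> D ?N 1"
    show "g \<in> colon (ideal_pow ?I (k + 1)) (X u)"
    proof (rule mem_by_monomials[OF is_ideal_colon[OF is_ideal_pow]])
      fix m assume "m \<in> Poly_Mapping.keys g"
      then have "1 \<le> cdeg ?N m" using gD unfolding D_def by blast
      then obtain c where cN: "c \<in> ?N" and mc: "1 \<le> Poly_Mapping.lookup m c"
        unfolding cdeg_def by (metis (no_types, lifting) less_one not_le sum.neutral)
      obtain a' where a'A: "a' \<in> A" and a'c: "{a', c} \<in> E" using cN unfolding nbr_def by blast
      have a'c_ne: "a' \<noteq> c" using edge_neq[OF sg a'c] .
      define rest where "rest = mk (\<lambda>v. Poly_Mapping.lookup m v + (if v \<in> A then 1 else 0)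
          - (if v = a' then 1 else 0) - (if v = c then 1 else 0))"
      have eq: "m + u = rest + (ee a' c + pw a b k)"
      proof (rule poly_mapping_eqI)
        fix v
        show "Poly_Mapping.lookup (m + u) v = Poly_Mapping.lookup (rest + (ee a' c + pw a b k)) v"
          using a'A a'c_ne mc
          by (cases "v = c"; cases "v = a'"; simp add: lookup_add rest_def u_def ee_def pw_def)
      qed
      have "X (ee a' c) * X (pw a b k) \<in> ideal_pow ?I (k + 1)"
        using ideal_mult_mem[OF var_mult_in[OF a'c] pw_in[OF ab]] by (simp add: var_mult)
      then have "X rest * (X (ee a' c) * X (pw a b k)) \<in> ideal_pow ?I (k + 1)"
        by (rule is_idealD(3)[OF is_ideal_pow])
      then have "X (m + u) \<in> ideal_pow ?I (k + 1)" unfolding eq by (simp add: X_mult)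
      then show "X m \<in> colon (ideal_pow ?I (k + 1)) (X u)"
        unfolding colon_def by (simp add: X_mult)
    qed
  qed
qed

lemma nbr_edge:
  assumes sg: "simple_graph E" and ne: "E \<noteq> {}" and vc: "vcover E (nbr E A)"
  shows "\<exists>a b. a \<in> A \<and> {a, b} \<in> E"
proof -
  obtain e where "e \<in> E" using ne by blast
  then obtain i j where ij: "{i, j} \<in> E" using sg unfolding simple_graph_def by (metis card_2_iff)
  then have "i \<in> nbr E A \<or> j \<in> nbr E A" using vc unfolding vcover_def by blast
  then show ?thesis unfolding nbr_def by blast
qed

lemma max_indep:
  fixes E :: "'v::finite set set"
  assumes sg: "simple_graph E"
  shows "\<exists>A. indep E A \<and> vcover E (nbr E A)"
proof -
  have "finite {A :: 'v set. indep E A}" by simp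
  moreover have "{} \<in> {A. indep E A}" unfolding indep_def by simp
  ultimately obtain A where A: "indep E A" and maxA: "\<And>B. indep E B \<Longrightarrow> A \<subseteq> B \<Longrightarrow> A = B"
    using finite_has_maximal[of "{A. indep E A}"] by blast
  have "vcover E (nbr E A)" unfolding vcover_def
  proof (intro allI impI)
    fix i j assume ij: "{i, j} \<in> E"
    have key: "x \<in> nbr E A" if "x \<notin> A" for x
    proof -
      have "\<not> indep E (insert x A)" using maxA[of "insert x A"] that by blast
      then obtain p q where pq: "{p, q} \<in> E" "p \<in> insert x A" "q \<in> insert x A" unfolding indep_def by blast
      have "p \<noteq> q" using edge_neq[OF sg pq(1)] .
      have "\<not> (p \<in> A \<and> q \<in> A)" using A pq(1) unfolding indep_def by blast
      then show ?thesis using pq \<open>p \<noteq> q\<close> unfolding nbr_def by (auto simp: insert_commute)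
    qed
    have "\<not> (i \<in> A \<and> j \<in> A)" using A ij unfolding indep_def by blast
    then show "i \<in> nbr E A \<or> j \<in> nbr E A" using key by blast
  qed
  with A show ?thesis by blast
qed

lemma pow_one: "is_ideal I \<Longrightarrow> ideal_pow I 1 = I"
proof -
  assume I: "is_ideal I"
  have "ideal_pow I 1 = ideal_mult I UNIV" by simp
  also have "\<dots> = I"
  proof
    show "ideal_mult I UNIV \<subseteq> I" unfolding ideal_mult_def
      by (rule ideal_gen_least[OF I]) (use ideal_mult_right[OF I] in blast)
    show "I \<subseteq> ideal_mult I UNIV" using ideal_mult_mem[of _ I 1 UNIV] by auto
  qed
  finally show ?thesis .
qed

definition Qv :: "('v::finite,'k::field) mpoly set \<Rightarrow> nat \<Rightarrow> bool" where
  "Qv J k \<longleftrightarrow> (\<exists>f P. homogeneous_of_deg k f \<and> P \<in> ass J \<and> colon J f = P)"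

lemma v_number_Qv: "v_number J = (LEAST k. Qv J k)"
  unfolding v_number_def Qv_def by simp

lemma witness_Qv:
  fixes E :: "'v::finite set set" and k :: nat
  assumes sg: "simple_graph E" and ind: "indep E A" and vc: "vcover E (nbr E A)"
    and aA: "a \<in> A" and ab: "{a, b} \<in> E"
  shows "Qv (ideal_pow (edge_ideal E :: ('v,'k::field) mpoly set) (k + 1)) (card A + 2 * k)"
proof -
  define u where "u \<equiv> mk (\<lambda>v. (if v \<in> A then 1 else 0) + (if v = a then k else 0) + (if v = b then k else 0))"
  have col: "colon (ideal_pow (edge_ideal E :: ('v,'k::field) mpoly set) (k + 1)) (X u) = D (nbr E A) 1"
    unfolding u_def by (rule witness[OF sg ind vc aA ab])
  have "a \<noteq> b" using edge_neq[OF sg ab] .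
  then have "mon_deg u = card A + 2 * k"
    unfolding u_def mon_deg_def by (simp add: sum.distrib sum.delta sum.If_cases)
  then have "homogeneous_of_deg (card A + 2 * k) (X u :: ('v,'k) mpoly)"
    unfolding homogeneous_of_deg_def by simp
  then show ?thesis unfolding Qv_def ass_def using col prime_D1 by blast
qed

lemma is_ideal_edge: "is_ideal (edge_ideal E :: ('v::finite,'k::field) mpoly set)"
  unfolding edge_ideal_def by (rule is_ideal_ideal_gen)

definition ED :: "'v set set \<Rightarrow> ('v::finite,'k::field) mpoly set" where
  "ED E = {p. \<forall>m\<in>Poly_Mapping.keys p. \<exists>i j. {i, j} \<in> E \<and> 1 \<le> Poly_Mapping.lookup m i \<and> 1 \<le> Poly_Mapping.lookup m j}"

lemma is_ideal_ED: "is_ideal (ED E :: ('v::finite,'k::field) mpoly set)"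
  unfolding is_ideal_def
proof (intro conjI ballI allI)
  show "0 \<in> (ED E :: ('v,'k) mpoly set)" unfolding ED_def by simp
  fix a b :: "('v,'k) mpoly" assume "a \<in> ED E" "b \<in> ED E"
  then show "a + b \<in> (ED E :: ('v,'k) mpoly set)" unfolding ED_def using keys_add[of a b] by blast
next
  fix a r :: "('v,'k) mpoly" assume a: "a \<in> ED E"
  show "r * a \<in> (ED E :: ('v,'k) mpoly set)" unfolding ED_def
  proof (intro CollectI ballI)
    fix m assume "m \<in> Poly_Mapping.keys (r * a)"
    then obtain x y where m: "m = x + y" "y \<in> Poly_Mapping.keys a" using keys_mult[of r a] by blast
    then obtain i j where "{i, j} \<in> E" "1 \<le> Poly_Mapping.lookup y i" "1 \<le> Poly_Mapping.lookup y j"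
      using a unfolding ED_def by blast
    then have "{i, j} \<in> E \<and> 1 \<le> Poly_Mapping.lookup m i \<and> 1 \<le> Poly_Mapping.lookup m j"
      unfolding m by (simp add: lookup_add)
    then show "\<exists>i j. {i, j} \<in> E \<and> 1 \<le> Poly_Mapping.lookup m i \<and> 1 \<le> Poly_Mapping.lookup m j"
      by blast
  qed
qed

lemma edge_ideal_eq_ED:
  assumes sg: "simple_graph E"
  shows "(edge_ideal E :: ('v::finite,'k::field) mpoly set) = ED E"
proof
  show "(edge_ideal E :: ('v,'k) mpoly set) \<subseteq> ED E"
    unfolding edge_ideal_def
  proof (rule ideal_gen_least[OF is_ideal_ED], rule subsetI)
    fix x :: "('v,'k) mpoly" assume "x \<in> {var i * var j |i j. {i, j} \<in> E}"
    then obtain i j where x: "x = var i * var j" "{i, j} \<in> E" by blast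
    have k: "Poly_Mapping.keys x = {ee i j}" using x(1) by (simp add: var_mult)
    have "1 \<le> Poly_Mapping.lookup (ee i j) i" "1 \<le> Poly_Mapping.lookup (ee i j) j" by (simp_all add: ee_def)
    then have "\<exists>i' j'. {i', j'} \<in> E \<and> 1 \<le> Poly_Mapping.lookup (ee i j) i' \<and> 1 \<le> Poly_Mapping.lookup (ee i j) j'"
      using x(2) by blast
    then show "x \<in> ED E" unfolding ED_def mem_Collect_eq k by simp
  qed
  show "ED E \<subseteq> (edge_ideal E :: ('v,'k) mpoly set)"
  proof
    fix p :: "('v,'k) mpoly" assume p: "p \<in> ED E"
    show "p \<in> edge_ideal E"
    proof (rule mem_by_monomials[OF is_ideal_edge])
      fix m assume "m \<in> Poly_Mapping.keys p"
      then obtain i j where ij: "{i, j} \<in> E" "1 \<le> Poly_Mapping.lookup m i" "1 \<le> Poly_Mapping.lookup m j"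
        using p unfolding ED_def by blast
      have ne: "i \<noteq> j" using edge_neq[OF sg ij(1)] .
      define rest where "rest = mk (\<lambda>v. Poly_Mapping.lookup m v - (if v = i then 1 else 0) - (if v = j then 1 else 0))"
      have "m = rest + ee i j"
      proof (rule poly_mapping_eqI)
        fix v show "Poly_Mapping.lookup m v = Poly_Mapping.lookup (rest + ee i j) v"
          using ij ne by (cases "v = i"; cases "v = j"; simp add: lookup_add rest_def ee_def)
      qed
      then have "X m = X rest * (var i * var j :: ('v,'k) mpoly)" by (simp add: var_mult X_mult)
      then show "X m \<in> (edge_ideal E :: ('v,'k) mpoly set)"
        using is_idealD(3)[OF is_ideal_edge var_mult_in[OF ij(1)]] by simp
    qed
  qed
qed

lemma crux:
  fixes E :: "'v::finite set set" and f :: "('v,'k::field) mpoly"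
  assumes sg: "simple_graph E" and hom: "homogeneous_of_deg d f"
    and pr: "prime_ideal (colon (edge_ideal E) f)"
  shows "\<exists>A. indep E A \<and> vcover E (nbr E A) \<and> card A \<le> d"
proof -
  let ?I = "edge_ideal E :: ('v,'k) mpoly set"
  let ?P = "colon ?I f"
  have eqED: "?I = ED E" by (rule edge_ideal_eq_ED[OF sg])
  have IP: "?I \<subseteq> ?P" unfolding colon_def using ideal_mult_right[OF is_ideal_edge] by blast
  have "f \<notin> ?I"
  proof
    assume "f \<in> ?I"
    then have "1 \<in> ?P" unfolding colon_def by simp
    then have "r \<in> ?P" for r using is_idealD(3)[of ?P 1 r] pr unfolding prime_ideal_def by simp
    then show False using pr unfolding prime_ideal_def by blast
  qed
  then have "f \<notin> (ED E :: ('v,'k) mpoly set)" using eqED by simp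
  then obtain m where mf: "m \<in> Poly_Mapping.keys f"
    and mnd: "\<And>i j. {i, j} \<in> E \<Longrightarrow> \<not> (1 \<le> Poly_Mapping.lookup m i \<and> 1 \<le> Poly_Mapping.lookup m j)"
    unfolding ED_def by blast
  define A where "A = {v. 1 \<le> Poly_Mapping.lookup m v}"
  have ind: "indep E A" unfolding indep_def A_def using mnd by blast
  have "card A = (\<Sum>v\<in>A. 1)" by simp
  also have "\<dots> \<le> (\<Sum>v\<in>A. Poly_Mapping.lookup m v)" by (rule sum_mono) (simp add: A_def)
  also have "\<dots> \<le> (\<Sum>v\<in>UNIV. Poly_Mapping.lookup m v)" by (rule sum_mono2) auto
  also have "\<dots> = d" using hom mf unfolding homogeneous_of_deg_def mon_deg_def by blast
  finally have cA: "card A \<le> d" .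
  define C where "C = {v. var v \<in> ?P}"
  have vcC: "vcover E C" unfolding vcover_def
  proof (intro allI impI)
    fix i j assume "{i, j} \<in> E"
    then have "var i * var j \<in> ?P" using var_mult_in IP by blast
    then show "i \<in> C \<or> j \<in> C" using pr unfolding prime_ideal_def C_def by blast
  qed
  have CN: "C \<subseteq> nbr E A"
  proof
    fix v assume "v \<in> C"
    then have "var v * f \<in> ?I" unfolding C_def colon_def by simp
    then have vf: "var v * f \<in> (ED E :: ('v,'k) mpoly set)" using eqED by simp
    define dv where "dv = mk (\<lambda>w. if w = v then 1 else 0)"
    have "var v = (X dv :: ('v,'k) mpoly)" unfolding dv_def by (rule var_X)
    then have "dv + m \<in> Poly_Mapping.keys (var v * f)" using mf by (simp add: keys_X_mult)
    then obtain i j where ij: "{i, j} \<in> E" "1 \<le> Poly_Mapping.lookup (dv + m) i" "1 \<le> Poly_Mapping.lookup (dv + m) j"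
      using vf unfolding ED_def by blast
    have ne: "i \<noteq> j" using edge_neq[OF sg ij(1)] .
    have li: "1 \<le> (if i = v then 1 else 0) + Poly_Mapping.lookup m i" and lj: "1 \<le> (if j = v then 1 else 0) + Poly_Mapping.lookup m j"
      using ij by (simp_all add: lookup_add dv_def)
    show "v \<in> nbr E A"
    proof (cases "1 \<le> Poly_Mapping.lookup m i")
      case True
      then have "\<not> 1 \<le> Poly_Mapping.lookup m j" using mnd[OF ij(1)] by blast
      then have "j = v" using lj by (auto split: if_splits)
      then show ?thesis using True ij(1) unfolding nbr_def A_def by blast
    next
      case False
      then have "i = v" using li by (auto split: if_splits)
      then have "1 \<le> Poly_Mapping.lookup m j" using lj ne by simp
      then show ?thesis using \<open>i = v\<close> ij(1) unfolding nbr_def A_def by (auto simp: insert_commute)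
    qed
  qed
  have "vcover E (nbr E A)" using vcC CN unfolding vcover_def by blast
  then show ?thesis using ind cA by blast
qed

theorem proposition4p15:
  fixes E :: "'v::finite set set"
  assumes "simple_graph E" and "E \<noteq> {}" and "n \<ge> 1"
  shows "v_number (ideal_pow (edge_ideal E :: ('v, 'k::field) mpoly set) (n + 1))
           \<le> 2 * n + v_number (edge_ideal E :: ('v, 'k) mpoly set)"
proof -
  note sg = assms(1)
  let ?I = "edge_ideal E :: ('v,'k) mpoly set"
  obtain A0 where A0: "indep E A0" "vcover E (nbr E A0)" using max_indep[OF sg] by blast
  obtain a0 b0 where ab0: "a0 \<in> A0" "{a0, b0} \<in> E" using nbr_edge[OF sg assms(2) A0(2)] by blast
  have "Qv (ideal_pow ?I (0 + 1)) (card A0 + 2 * 0)" by (rule witness_Qv[OF sg A0 ab0])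
  moreover have "ideal_pow ?I 1 = ?I" by (rule pow_one[OF is_ideal_edge])
  ultimately have "Qv ?I (card A0)" by simp
  then have "Qv ?I (v_number ?I)" unfolding v_number_Qv by (rule LeastI)
  then obtain f P where f: "homogeneous_of_deg (v_number ?I) f" "P \<in> ass ?I" "colon ?I f = P"
    unfolding Qv_def by blast
  then have "prime_ideal (colon ?I f)" unfolding ass_def by simp
  then obtain A where A: "indep E A" "vcover E (nbr E A)" "card A \<le> v_number ?I"
    using crux[OF sg f(1)] by blast
  obtain a b where ab: "a \<in> A" "{a, b} \<in> E" using nbr_edge[OF sg assms(2) A(2)] by blast
  have "Qv (ideal_pow ?I (n + 1)) (card A + 2 * n)" by (rule witness_Qv[OF sg A(1,2) ab])
  then have "v_number (ideal_pow ?I (n + 1)) \<le> card A + 2 * n" unfolding v_number_Qv by (rule Least_le)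
  then show ?thesis using A(3) by simp
qed

end
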